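(* Let $d\ge2$ and let $P$ be an essential pattern subgroup of $G(d)$ with $P(d-1)=G(d-1)$ and $[G(d):P]=4$. Then there exist $k_0,\ldots,k_{d-2}\in\{0,1,2,3\}$ such that $P$ is generated by $\{a_iz_{k_i}: 0\le i\le d-2\}\cup\{[a_1,a_{d-1}]\}$, where $z_0=\mathrm{id}$, $z_1=a_{d-1}$, $z_2=a_{d-1}^{a_0}$, $z_3=[a_0,a_{d-1}]$.
   Context: Let $X=\{0,1\}$, $X^*$ the rooted binary tree of finite words, $G(d)$ the automorphism group of the finite tree of words of length $\le d$; finite sections $g(wv)=g(w)g_w(v)$; $\pi_k$ restriction to words of length $\le k$, $P(k)=\pi_k(P)$. A subgroup $P\le G(d)$ is an essential pattern group if for every $p\in P$ and $i\in\{0,1\}$ there is $q\in P$ with $\pi_{d-1}(q)=p_i$. For $0\le i\le d-1$, $a_i\in G(d)$ swaps $0^i0w$ with $0^i1w$ for all words $w$ and fixes all other words. $[h,k]=h^{-1}k^{-1}hk$ and $h^k=k^{-1}hk$. *)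

theory Defs
  imports "HOL-Algebra.Algebra"
begin

text \<open>Words over X = {0,1}; we encode 0 as False and 1 as True.\<close>
type_synonym word = "bool list"

definition tree :: "nat \<Rightarrow> word set" where
  "tree d = {w. length w \<le> d}"

text \<open>Automorphisms of the finite rooted binary tree of words of length at most d,
  represented as functions on all words that are the identity off the tree.\<close>
definition is_aut :: "nat \<Rightarrow> (word \<Rightarrow> word) \<Rightarrow> bool" where
  "is_aut d g \<longleftrightarrow> bij_betw g (tree d) (tree d)
     \<and> (\<forall>w \<in> tree d. length (g w) = length w)
     \<and> (\<forall>v w. v @ w \<in> tree d \<longrightarrow> (\<exists>u. g (v @ w) = g v @ u))
     \<and> (\<forall>w. w \<notin> tree d \<longrightarrow> g w = w)"

definition G :: "nat \<Rightarrow> (word \<Rightarrow> word) monoid" where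
  "G d = \<lparr>carrier = {g. is_aut d g}, monoid.mult = (\<lambda>g h. g \<circ> h), one = id\<rparr>"

definition restr :: "nat \<Rightarrow> (word \<Rightarrow> word) \<Rightarrow> (word \<Rightarrow> word)" where
  "restr k g = (\<lambda>w. if length w \<le> k then g w else w)"

text \<open>Section g_v of g in G(d) at vertex v: g(v w) = g(v) g_v(w); it lies in G(d - |v|).\<close>
definition sect :: "nat \<Rightarrow> (word \<Rightarrow> word) \<Rightarrow> word \<Rightarrow> (word \<Rightarrow> word)" where
  "sect d g v = (\<lambda>w. if length w \<le> d - length v then drop (length v) (g (v @ w)) else w)"

definition essential_pattern :: "nat \<Rightarrow> (word \<Rightarrow> word) set \<Rightarrow> bool" where
  "essential_pattern d P \<longleftrightarrow> subgroup P (G d)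
     \<and> (\<forall>p \<in> P. \<forall>x::bool. \<exists>q \<in> P. restr (d - 1) q = sect d p [x])"

definition a :: "nat \<Rightarrow> nat \<Rightarrow> (word \<Rightarrow> word)" where
  "a d i = (\<lambda>w. if length w \<le> d \<and> i < length w \<and> take i w = replicate i False
                then w[i := \<not> w ! i] else w)"

definition comm :: "('g, 'b) monoid_scheme \<Rightarrow> 'g \<Rightarrow> 'g \<Rightarrow> 'g" where
  "comm H h k = inv\<^bsub>H\<^esub> h \<otimes>\<^bsub>H\<^esub> inv\<^bsub>H\<^esub> k \<otimes>\<^bsub>H\<^esub> h \<otimes>\<^bsub>H\<^esub> k"

definition conj :: "('g, 'b) monoid_scheme \<Rightarrow> 'g \<Rightarrow> 'g \<Rightarrow> 'g" where
  "conj H h k = inv\<^bsub>H\<^esub> k \<otimes>\<^bsub>H\<^esub> h \<otimes>\<^bsub>H\<^esub> k"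

definition z :: "nat \<Rightarrow> nat \<Rightarrow> (word \<Rightarrow> word)" where
  "z d k = (if k = 0 then id
            else if k = 1 then a d (d - 1)
            else if k = 2 then conj (G d) (a d (d - 1)) (a d 0)
            else comm (G d) (a d 0) (a d (d - 1)))"

end

theory Submission
  imports Defs
begin


lemma tree_iff[simp]: "w \<in> tree d \<longleftrightarrow> length w \<le> d" by (simp add: tree_def)

lemma G_carrier[simp]: "carrier (G d) = {g. is_aut d g}" by (simp add: G_def)
lemma G_mult[simp]: "x \<otimes>\<^bsub>G d\<^esub> y = x \<circ> y" by (simp add: G_def)
lemma G_one[simp]: "\<one>\<^bsub>G d\<^esub> = id" by (simp add: G_def)

lemma is_aut_len: "is_aut n g \<Longrightarrow> length w \<le> n \<Longrightarrow> length (g w) = length w"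
  by (simp add: is_aut_def)
lemma is_aut_len': "is_aut n g \<Longrightarrow> length (g w) = length w"
  unfolding is_aut_def by (cases "length w \<le> n") auto
lemma is_aut_off: "is_aut n g \<Longrightarrow> \<not> length w \<le> n \<Longrightarrow> g w = w"
  by (simp add: is_aut_def)
lemma is_aut_pre: "is_aut n g \<Longrightarrow> length (v @ w) \<le> n \<Longrightarrow> \<exists>u. g (v @ w) = g v @ u"
  by (simp add: is_aut_def)
lemma is_aut_inj: "is_aut n g \<Longrightarrow> g x = g y \<Longrightarrow> x = y"
proof -
  assume g: "is_aut n g" and e: "g x = g y"
  show "x = y"
  proof (cases "length x \<le> n")
    case True
    then have "length y \<le> n" using is_aut_len'[OF g, of x] is_aut_len'[OF g, of y] e by simp
    moreover have "inj_on g (tree n)" using g by (simp add: is_aut_def bij_betw_def)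
    ultimately show ?thesis using True e by (simp add: inj_on_def)
  next
    case False
    then have "\<not> length y \<le> n" using is_aut_len'[OF g, of x] is_aut_len'[OF g, of y] e by simp
    then show ?thesis using False e g by (simp add: is_aut_off)
  qed
qed


lemma is_aut_id: "is_aut n id"
  unfolding is_aut_def by auto

lemma is_aut_comp: "is_aut n f \<Longrightarrow> is_aut n g \<Longrightarrow> is_aut n (f \<circ> g)"
proof -
  assume f: "is_aut n f" and g: "is_aut n g"
  have "bij_betw (f \<circ> g) (tree n) (tree n)"
    using f g unfolding is_aut_def using bij_betw_trans by blast
  moreover have "\<forall>w\<in>tree n. length ((f\<circ>g) w) = length w"
    using f g by (simp add: is_aut_len)
  moreover have "\<forall>v w. v @ w \<in> tree n \<longrightarrow> (\<exists>u. (f\<circ>g) (v @ w) = (f\<circ>g) v @ u)"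
  proof (intro allI impI)
    fix v w assume vw: "v @ w \<in> tree n"
    obtain u where u: "g (v @ w) = g v @ u" using is_aut_pre[OF g] vw by auto
    have "length (g v @ u) \<le> n" using u vw is_aut_len[OF g] by (metis tree_iff)
    then obtain u' where "f (g v @ u) = f (g v) @ u'" using is_aut_pre[OF f] by blast
    then show "\<exists>u. (f\<circ>g) (v @ w) = (f\<circ>g) v @ u" using u by auto
  qed
  moreover have "\<forall>w. w \<notin> tree n \<longrightarrow> (f\<circ>g) w = w" using f g by (simp add: is_aut_off)
  ultimately show ?thesis unfolding is_aut_def by blast
qed

definition ginv :: "nat \<Rightarrow> (word \<Rightarrow> word) \<Rightarrow> word \<Rightarrow> word" where
  "ginv n g = (\<lambda>w. if length w \<le> n then inv_into (tree n) g w else w)"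

lemma ginv_left: "is_aut n g \<Longrightarrow> ginv n g (g w) = w"
proof -
  assume g: "is_aut n g"
  show ?thesis
  proof (cases "length w \<le> n")
    case True
    then show ?thesis using g unfolding ginv_def is_aut_def bij_betw_def
      by (auto intro: inv_into_f_f)
  next
    case False then show ?thesis using g by (simp add: is_aut_off ginv_def)
  qed
qed

lemma ginv_right: "is_aut n g \<Longrightarrow> g (ginv n g w) = w"
proof -
  assume g: "is_aut n g"
  show ?thesis
  proof (cases "length w \<le> n")
    case True
    then have "w \<in> g ` tree n" using g unfolding is_aut_def bij_betw_def by auto
    then show ?thesis using True unfolding ginv_def by (auto intro: f_inv_into_f)
  next
    case False then show ?thesis using g by (simp add: is_aut_off ginv_def)
  qed
qed

lemma is_aut_ginv: "is_aut n g \<Longrightarrow> is_aut n (ginv n g)"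
proof -
  assume g: "is_aut n g"
  have len: "length (ginv n g w) = length w" for w
    using is_aut_len'[OF g, of "ginv n g w"] ginv_right[OF g, of w] by simp
  have B: "bij_betw (ginv n g) (tree n) (tree n)"
  proof (rule bij_betwI[where g=g])
    show "ginv n g \<in> tree n \<rightarrow> tree n" using len by (simp add: Pi_def)
    show "g \<in> tree n \<rightarrow> tree n" using is_aut_len'[OF g] by (simp add: Pi_def)
    show "g (ginv n g x) = x" for x by (rule ginv_right[OF g])
    show "ginv n g (g x) = x" for x by (rule ginv_left[OF g])
  qed
  have PR: "\<forall>v w. v @ w \<in> tree n \<longrightarrow> (\<exists>u. ginv n g (v @ w) = ginv n g v @ u)"
  proof (intro allI impI)
    fix v w assume vw: "v @ w \<in> tree n"
    define x where "x = ginv n g (v @ w)"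
    have lx: "length x = length v + length w" using len x_def by simp
    have "length (take (length v) x @ drop (length v) x) \<le> n" using lx vw by simp
    then obtain u where "g (take (length v) x @ drop (length v) x) = g (take (length v) x) @ u"
      using is_aut_pre[OF g] by blast
    then have u: "g x = g (take (length v) x) @ u" by simp
    have "g x = v @ w" using ginv_right[OF g] x_def by simp
    moreover have "length (g (take (length v) x)) = length v" using is_aut_len'[OF g] lx by simp
    ultimately have "g (take (length v) x) = v" using u by (metis append_eq_append_conv)
    then have "take (length v) x = ginv n g v" using ginv_left[OF g] by metis
    then have "ginv n g (v @ w) = ginv n g v @ drop (length v) x" unfolding x_def by (metis append_take_drop_id)
    then show "\<exists>u. ginv n g (v @ w) = ginv n g v @ u" by blast
  qed
  have O: "\<forall>w. w \<notin> tree n \<longrightarrow> ginv n g w = w" by (simp add: ginv_def)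
  have L: "\<forall>w\<in>tree n. length (ginv n g w) = length w" using len by blast
  show ?thesis unfolding is_aut_def using B PR O L by (intro conjI)
qed


lemma group_G: "group (G n)"
proof (rule groupI)
  fix x assume "x \<in> carrier (G n)"
  then show "\<exists>y\<in>carrier (G n). y \<otimes>\<^bsub>G n\<^esub> x = \<one>\<^bsub>G n\<^esub>"
    by (intro bexI[of _ "ginv n x"]) (auto simp: is_aut_ginv ginv_left fun_eq_iff)
qed (auto simp: is_aut_comp is_aut_id comp_assoc)

definition s :: "nat \<Rightarrow> word \<Rightarrow> word \<Rightarrow> word" where
  "s N v t = (if length t \<le> N \<and> length v < length t \<and> take (length v) t = v
              then t[length v := \<not> t ! length v] else t)"

lemma s_len[simp]: "length (s N v t) = length t"
  by (simp add: s_def)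

lemma s_inv[simp]: "s N v (s N v t) = t"
  by (auto simp: s_def)

lemma s_comp_self: "s N v \<circ> s N v = id"
  by (simp add: fun_eq_iff)

lemma s_off: "\<not> length t \<le> N \<Longrightarrow> s N v t = t"
  by (simp add: s_def)

lemma s_pre: "length (x @ w) \<le> N \<Longrightarrow> \<exists>u. s N v (x @ w) = s N v x @ u"
proof (cases "length x \<le> N \<and> length v < length x \<and> take (length v) x = v")
  case True
  moreover assume "length (x @ w) \<le> N"
  ultimately have "s N v (x @ w) = s N v x @ w" by (auto simp: s_def list_update_append nth_append)
  then show ?thesis by blast
next
  case False
  then have sx: "s N v x = x" by (auto simp: s_def)
  show ?thesis
  proof (cases "length v < length x")
    case True
    then have "s N v (x @ w) = x @ w" using False by (auto simp: s_def)
    then show ?thesis using sx by (intro exI[of _ w]) simp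
  next
    case False
    then have "s N v (x @ w) = x @ drop (length x) (s N v (x @ w))" by (auto simp: s_def list_update_append)
    then show ?thesis using sx by metis
  qed
qed

lemma is_aut_s: "is_aut N (s N v)"
proof -
  have B: "bij_betw (s N v) (tree N) (tree N)"
    by (rule bij_betwI[where g="s N v"]) (auto simp: Pi_def)
  have PR: "\<forall>x w. x @ w \<in> tree N \<longrightarrow> (\<exists>u. s N v (x @ w) = s N v x @ u)" using s_pre by simp
  have O: "\<forall>w. w \<notin> tree N \<longrightarrow> s N v w = w" by (simp add: s_off)
  have L: "\<forall>w\<in>tree N. length (s N v w) = length w" by simp
  show ?thesis unfolding is_aut_def using B PR O L by (intro conjI)
qed

lemma a_eq_s: "a N i = s N (replicate i False)"
  by (simp add: a_def s_def fun_eq_iff)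

lemma take_eq_iff: "length v \<le> length t \<Longrightarrow> take (length v) t = v \<longleftrightarrow> (\<forall>j<length v. t!j = v!j)"
  by (auto simp: list_eq_iff_nth_eq)

lemma s_alt: "s N v t = (if length t \<le> N \<and> length v < length t \<and> (\<forall>j<length v. t!j = v!j)
              then t[length v := \<not> t ! length v] else t)"
  unfolding s_def by (cases "length v < length t") (auto simp: take_eq_iff)

lemma s_conj':
  assumes "i < length v" "v ! i"
  shows "s N (take i v) (s N (v[i := False]) (s N (take i v) t)) = s N v t"
proof -
  let ?u = "take i v" and ?w = "v[i := False]"
  let ?C = "\<lambda>x t. length t \<le> N \<and> length x < length t \<and> (\<forall>j<length x. t!j = x!j)"
  have h1: "?C v t \<Longrightarrow> ?C ?u t" for t using assms by auto
  have h2: "?C ?w t \<Longrightarrow> ?C ?u t" for t using assms by (auto simp: nth_list_update)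
  have h3: "?C ?u t \<Longrightarrow> ?C ?w (t[i := \<not> t!i]) \<longleftrightarrow> ?C v t" for t
    using assms by (auto simp: nth_list_update)
  show ?thesis
  proof (cases "?C ?u t")
    case True
    note T = True
    show ?thesis
    proof (cases "?C v t")
      case True
      have 1: "s N ?u t = t[i := \<not> t!i]" using T assms by (simp add: s_alt)
      have 2: "s N ?w (t[i := \<not> t!i]) = (t[i := \<not> t!i])[length v := \<not> t ! length v]"
        using h3[OF T] True assms by (simp add: s_alt)
      have 3: "?C ?u ((t[i := \<not> t!i])[length v := \<not> t ! length v])" using T assms by (auto simp: nth_list_update)
      have 4: "s N ?u ((t[i := \<not> t!i])[length v := \<not> t ! length v]) = t[length v := \<not> t ! length v]"
        using 3 assms by (simp add: s_alt list_update_swap nth_list_update)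
      show ?thesis using 1 2 4 True by (simp add: s_alt)
    next
      case False
      have 1: "s N ?u t = t[i := \<not> t!i]" using T assms by (simp add: s_alt)
      have nC: "\<not> ?C ?w (t[i := \<not> t!i])" using h3[OF T] False by blast
      have 2: "s N ?w (t[i := \<not> t!i]) = t[i := \<not> t!i]"
        using nC unfolding s_alt by (simp only: if_False)
      have 4: "s N ?u (t[i := \<not> t!i]) = t"
        using T assms by (simp add: s_alt nth_list_update)
      have 5: "s N v t = t" using False unfolding s_alt by (simp only: if_False)
      show ?thesis using 1 2 4 5 by simp
    qed
  next
    case False
    have a1: "s N ?u t = t" using False unfolding s_alt by (simp only: if_False)
    have a2: "\<not> ?C ?w t" using False h2 by blast
    have a3: "s N ?w t = t" using a2 unfolding s_alt by (simp only: if_False)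
    have a4: "\<not> ?C v t" using False h1 by blast
    have a5: "s N v t = t" using a4 unfolding s_alt by (simp only: if_False)
    show ?thesis using a1 a3 a5 by simp
  qed
qed

lemma s_conj:
  assumes "i < length v" "v ! i"
  shows "s N (take i v) \<circ> s N (v[i := False]) \<circ> s N (take i v) = s N v"
  using s_conj'[OF assms] by (simp add: fun_eq_iff)

lemma restr_comp: "is_aut N h \<Longrightarrow> restr k (g \<circ> h) = restr k g \<circ> restr k h"
  by (auto simp: restr_def fun_eq_iff is_aut_len')

lemma restr_s: "k \<le> N \<Longrightarrow> restr k (s N v) = s k v"
  by (auto simp: restr_def fun_eq_iff s_def)

lemma restr_a: "k \<le> N \<Longrightarrow> restr k (a N i) = a k i"
  by (simp add: a_eq_s restr_s)


lemma is_aut_take: "is_aut N g \<Longrightarrow> length t \<le> N \<Longrightarrow> take j (g t) = g (take j t)"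
proof -
  assume g: "is_aut N g" and t: "length t \<le> N"
  have "length (take j t @ drop j t) \<le> N" using t by simp
  then obtain u where u: "g (take j t @ drop j t) = g (take j t) @ u" using is_aut_pre[OF g] by blast
  then have u': "g t = g (take j t) @ u" by simp
  have lA: "length (g (take j t)) = min j (length t)" using is_aut_len'[OF g] by simp
  have "take j (g t) = g (take j t) @ take (j - min j (length t)) u"
    using u' lA by (simp add: take_append)
  moreover have "take (j - min j (length t)) u = []"
  proof (cases "j \<le> length t")
    case True then show ?thesis by simp
  next
    case False
    then have "length u = 0" using u' lA is_aut_len'[OF g, of t] by simp
    then show ?thesis by simp
  qed
  ultimately show ?thesis by simp
qed

lemma split_last_len: "length w = Suc m \<Longrightarrow> w = take m w @ [w ! m]"
  by (metis lessI take_Suc_conv_app_nth take_all order_refl)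

lemma level_cases:
  assumes g: "is_aut N g" and fx: "\<forall>t. length t \<le> m \<longrightarrow> g t = t" and m: "m < N" and v: "length v = m"
  shows "g (v @ [b]) = v @ [b] \<or> g (v @ [b]) = v @ [\<not> b]"
proof -
  have "take m (g (v @ [b])) = g (take m (v @ [b]))" using is_aut_take[OF g] v m by simp
  also have "\<dots> = v" using fx v by simp
  finally have "take m (g (v @ [b])) = v" .
  moreover have "length (g (v @ [b])) = Suc m" using is_aut_len'[OF g] v by simp
  ultimately obtain c where "g (v @ [b]) = v @ [c]"
    using split_last_len[of "g (v @ [b])" m] by metis
  then show ?thesis by (cases b; cases c) auto
qed

lemma level_iff:
  assumes g: "is_aut N g" and fx: "\<forall>t. length t \<le> m \<longrightarrow> g t = t" and m: "m < N" and v: "length v = m"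
  shows "g (v @ [b]) = v @ [b] \<longleftrightarrow> g (v @ [\<not> b]) = v @ [\<not> b]"
proof -
  have inj: "g x = g y \<Longrightarrow> x = y" for x y using is_aut_inj[OF g] .
  show ?thesis
    using level_cases[OF g fx m v, of b] level_cases[OF g fx m v, of "\<not> b"] inj[of "v @ [b]" "v @ [\<not> b]"]
    by auto
qed

definition K :: "nat \<Rightarrow> (word \<Rightarrow> word) set" where
  "K d = {k. is_aut d k \<and> (\<forall>t. length t \<le> d - 1 \<longrightarrow> k t = t)}"

lemma K_comm:
  assumes d: "d \<ge> 1" and k1: "k1 \<in> K d" and k2: "k2 \<in> K d"
  shows "k1 \<circ> k2 = k2 \<circ> k1"
proof
  fix t
  show "(k1 \<circ> k2) t = (k2 \<circ> k1) t"
  proof (cases "length t = d")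
    case False
    then have "length t \<le> d - 1 \<or> \<not> length t \<le> d" by auto
    then show ?thesis using k1 k2 by (auto simp: K_def is_aut_off)
  next
    case True
    then obtain v b where t: "t = v @ [b]" and v: "length v = d - 1"
      using d by (metis append_butlast_last_id diff_Suc_1 length_butlast length_0_conv not_one_le_zero)
    have A1: "is_aut d k1" "\<forall>t. length t \<le> d - 1 \<longrightarrow> k1 t = t" using k1 by (auto simp: K_def)
    have A2: "is_aut d k2" "\<forall>t. length t \<le> d - 1 \<longrightarrow> k2 t = t" using k2 by (auto simp: K_def)
    have m: "d - 1 < d" using d by simp
    note c1 = level_cases[OF A1 m v] and c2 = level_cases[OF A2 m v]
    note i1 = level_iff[OF A1 m v] and i2 = level_iff[OF A2 m v]
    show ?thesis unfolding t
      using c1[of b] c1[of "\<not> b"] c2[of b] c2[of "\<not> b"] i1[of b] i2[of b]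
      by (cases b) auto
  qed
qed

lemma s_in_K: "length x \<ge> d - 1 \<Longrightarrow> s d x \<in> K d"
  by (auto simp: K_def is_aut_s s_def)

lemma K_comp: "k1 \<in> K d \<Longrightarrow> k2 \<in> K d \<Longrightarrow> k1 \<circ> k2 \<in> K d"
  by (auto simp: K_def is_aut_comp)

lemma id_in_K: "id \<in> K d" by (simp add: K_def is_aut_id)

lemma s_leaf_conj:
  assumes g: "is_aut d g" and x: "length x = d - 1" and d: "d \<ge> 1"
  shows "g \<circ> s d x = s d (g x) \<circ> g"
proof
  fix t
  have lgx: "length (g x) = d - 1" using is_aut_len'[OF g] x by simp
  show "(g \<circ> s d x) t = (s d (g x) \<circ> g) t"
  proof (cases "length t \<le> d \<and> length x < length t \<and> take (length x) t = x")
    case True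
    then have "length t = d" using x by auto
    then have "length t = Suc (d - 1)" using d by simp
    then obtain b where t: "t = x @ [b]" using True x split_last_len[of t "d - 1"] by metis
    have lx': "Suc (length x) \<le> d" using x d by simp
    have st: "s d x t = x @ [\<not> b]" using t lx' by (simp add: s_def list_update_append)
    obtain c where c: "g (x @ [b]) = g x @ [c]"
    proof -
      have "take (d-1) (g (x @ [b])) = g x" using is_aut_take[OF g, of "x @ [b]" "d-1"] x d by simp
      moreover have "length (g (x @ [b])) = d" using is_aut_len'[OF g] x d by simp
      ultimately show ?thesis using that lgx d split_last_len[of "g (x @ [b])" "d - 1"]
        by (metis Suc_diff_1 less_le_trans zero_less_one)
    qed
    obtain c' where c': "g (x @ [\<not> b]) = g x @ [c']"
    proof -
      have "take (d-1) (g (x @ [\<not> b])) = g x" using is_aut_take[OF g, of "x @ [\<not>b]" "d-1"] x d by simp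
      moreover have "length (g (x @ [\<not>b])) = d" using is_aut_len'[OF g] x d by simp
      ultimately show ?thesis using that lgx d split_last_len[of "g (x @ [\<not>b])" "d - 1"]
        by (metis Suc_diff_1 less_le_trans zero_less_one)
    qed
    have "c' = (\<not> c)" using c c' is_aut_inj[OF g, of "x @ [b]" "x @ [\<not> b]"] by (cases b; cases c; cases c') auto
    moreover have lg': "Suc (length (g x)) \<le> d" using lgx d by simp
    then have "s d (g x) (g x @ [c]) = g x @ [\<not> c]" by (simp add: s_def list_update_append)
    ultimately show ?thesis using st c c' t by simp
  next
    case False
    then have st: "s d x t = t" unfolding s_def by (rule if_not_P)
    have "\<not> (length (g t) \<le> d \<and> length (g x) < length (g t) \<and> take (length (g x)) (g t) = g x)"
    proof
      assume H: "length (g t) \<le> d \<and> length (g x) < length (g t) \<and> take (length (g x)) (g t) = g x"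
      then have lt: "length t \<le> d" "length x < length t" using is_aut_len'[OF g] lgx x by auto
      then have "g (take (length x) t) = g x" using H is_aut_take[OF g] lgx x by metis
      then have "take (length x) t = x" using is_aut_inj[OF g] by blast
      then show False using False lt by blast
    qed
    then have "s d (g x) (g t) = g t" unfolding s_def by (rule if_not_P)
    then show ?thesis using st by simp
  qed
qed


definition R :: "nat \<Rightarrow> (word \<Rightarrow> word) set \<Rightarrow> word \<Rightarrow> word \<Rightarrow> bool" where
  "R d S x y \<longleftrightarrow> s d x \<circ> s d y \<in> S"

definition full :: "nat \<Rightarrow> (word \<Rightarrow> word) set \<Rightarrow> bool" where
  "full d S \<longleftrightarrow> (\<forall>\<tau>. is_aut d \<tau> \<longrightarrow> (\<exists>\<sigma>\<in>S. restr (d - 1) \<sigma> = restr (d - 1) \<tau>))"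

lemma R_refl: "subgroup S (G d) \<Longrightarrow> R d S x x"
  using subgroup.one_closed[of S "G d"] by (simp add: R_def s_comp_self)

lemma R_sym:
  assumes "d \<ge> 1" "length x = d - 1" "length y = d - 1" "R d S x y"
  shows "R d S y x"
proof -
  have "s d x \<circ> s d y = s d y \<circ> s d x" using K_comm[OF assms(1)] s_in_K assms(2,3) by simp
  then show ?thesis using assms(4) by (simp add: R_def)
qed

lemma R_trans:
  assumes "subgroup S (G d)" "R d S x y" "R d S y u"
  shows "R d S x u"
proof -
  have "(s d x \<circ> s d y) \<circ> (s d y \<circ> s d u) \<in> S"
    using subgroup.m_closed[OF assms(1)] assms(2,3) unfolding R_def by (metis G_mult)
  moreover have "(s d x \<circ> s d y) \<circ> (s d y \<circ> s d u) = s d x \<circ> s d u"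
    by (simp add: fun_eq_iff)
  ultimately show ?thesis by (simp add: R_def)
qed

lemma inv_G_right: "\<sigma> \<in> carrier (G d) \<Longrightarrow> \<sigma> \<circ> inv\<^bsub>G d\<^esub> \<sigma> = id"
  using group.r_inv[OF group_G, of \<sigma> d] by simp

lemma inv_G_left: "\<sigma> \<in> carrier (G d) \<Longrightarrow> inv\<^bsub>G d\<^esub> \<sigma> \<circ> \<sigma> = id"
  using group.l_inv[OF group_G, of \<sigma> d] by simp

lemma inv_G_carrier: "\<sigma> \<in> carrier (G d) \<Longrightarrow> inv\<^bsub>G d\<^esub> \<sigma> \<in> carrier (G d)"
  using group.inv_closed[OF group_G] by blast

lemma inv_G_invol: "\<sigma> \<in> carrier (G d) \<Longrightarrow> \<sigma> \<circ> \<sigma> = id \<Longrightarrow> inv\<^bsub>G d\<^esub> \<sigma> = \<sigma>"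
  by (rule group.inv_equality[OF group_G]) simp_all

lemma inv_s: "inv\<^bsub>G d\<^esub> (s d x) = s d x"
  by (rule inv_G_invol) (simp_all add: is_aut_s s_comp_self)

lemma conj_mem:
  assumes S: "subgroup S (G d)" and sig: "\<sigma> \<in> S" and k: "k \<in> S"
  shows "\<sigma> \<circ> k \<circ> inv\<^bsub>G d\<^esub> \<sigma> \<in> S"
proof -
  have "inv\<^bsub>G d\<^esub> \<sigma> \<in> S" using subgroup.m_inv_closed[OF S sig] .
  then show ?thesis using subgroup.m_closed[OF S] sig k by (metis G_mult)
qed

lemma full_get:
  assumes "full d S" "is_aut d \<tau>"
  obtains \<sigma> where "\<sigma> \<in> S" "restr (d - 1) \<sigma> = restr (d - 1) \<tau>"
  using assms unfolding full_def by blast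

lemma restr_eq_app: "restr k \<sigma> = restr k \<tau> \<Longrightarrow> length x \<le> k \<Longrightarrow> \<sigma> x = \<tau> x"
  by (drule fun_cong[of _ _ x]) (simp add: restr_def)

lemma R_inv:
  assumes S: "subgroup S (G d)" and F: "full d S" and d: "d \<ge> 1" and tau: "is_aut d \<tau>"
    and x: "length x = d - 1" and y: "length y = d - 1" and r: "R d S x y"
  shows "R d S (\<tau> x) (\<tau> y)"
proof -
  obtain \<sigma> where sig: "\<sigma> \<in> S" "restr (d - 1) \<sigma> = restr (d - 1) \<tau>" using full_get[OF F tau] .
  have sc: "\<sigma> \<in> carrier (G d)" using subgroup.subset[OF S] sig(1) by blast
  then have sa: "is_aut d \<sigma>" by simp
  have eq: "\<sigma> x = \<tau> x" "\<sigma> y = \<tau> y" using restr_eq_app[OF sig(2)] x y by auto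
  have "\<sigma> \<circ> (s d x \<circ> s d y) \<circ> inv\<^bsub>G d\<^esub> \<sigma> \<in> S" using conj_mem[OF S sig(1)] r by (simp add: R_def)
  moreover have "\<sigma> \<circ> (s d x \<circ> s d y) = s d (\<sigma> x) \<circ> s d (\<sigma> y) \<circ> \<sigma>"
  proof -
    have e1: "\<sigma> (s d x t) = s d (\<sigma> x) (\<sigma> t)" for t using fun_cong[OF s_leaf_conj[OF sa x d], of t] by simp
    have e2: "\<sigma> (s d y t) = s d (\<sigma> y) (\<sigma> t)" for t using fun_cong[OF s_leaf_conj[OF sa y d], of t] by simp
    show ?thesis by (simp add: fun_eq_iff e1 e2)
  qed
  ultimately have "s d (\<sigma> x) \<circ> s d (\<sigma> y) \<circ> (\<sigma> \<circ> inv\<^bsub>G d\<^esub> \<sigma>) \<in> S" by (simp add: comp_assoc)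
  then show ?thesis using inv_G_right[OF sc] eq by (simp add: R_def)
qed

lemma single_inv:
  assumes S: "subgroup S (G d)" and F: "full d S" and d: "d \<ge> 1" and tau: "is_aut d \<tau>"
    and x: "length x = d - 1" and r: "s d x \<in> S"
  shows "s d (\<tau> x) \<in> S"
proof -
  obtain \<sigma> where sig: "\<sigma> \<in> S" "restr (d - 1) \<sigma> = restr (d - 1) \<tau>" using full_get[OF F tau] .
  have sc: "\<sigma> \<in> carrier (G d)" using subgroup.subset[OF S] sig(1) by blast
  then have sa: "is_aut d \<sigma>" by simp
  have eq: "\<sigma> x = \<tau> x" using restr_eq_app[OF sig(2)] x by auto
  have "\<sigma> \<circ> s d x \<circ> inv\<^bsub>G d\<^esub> \<sigma> \<in> S" using conj_mem[OF S sig(1) r] .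
  moreover have "\<sigma> \<circ> s d x = s d (\<sigma> x) \<circ> \<sigma>"
    using s_leaf_conj[OF sa x d] by simp
  ultimately have "s d (\<sigma> x) \<circ> (\<sigma> \<circ> inv\<^bsub>G d\<^esub> \<sigma>) \<in> S" by (simp add: comp_assoc)
  then show ?thesis using inv_G_right[OF sc] eq by simp
qed


lemma trans_leaf:
  assumes d: "d \<ge> 1"
  shows "length x = d - 1 \<Longrightarrow> length y = d - 1 \<Longrightarrow> take (length w) x = w \<Longrightarrow> take (length w) y = w \<Longrightarrow>
     \<exists>\<tau>. is_aut d \<tau> \<and> \<tau> x = y \<and> (\<forall>z. length z = d - 1 \<and> take (length w) z \<noteq> w \<longrightarrow> \<tau> z = z)"
proof (induction "card {i. i < d - 1 \<and> x!i \<noteq> y!i}" arbitrary: x rule: less_induct)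
  case less
  let ?D = "{i. i < d - 1 \<and> x!i \<noteq> y!i}"
  show ?case
  proof (cases "?D = {}")
    case True
    then have "x = y" using less.prems by (auto intro: nth_equalityI)
    then show ?thesis by (intro exI[of _ id]) (simp add: is_aut_id)
  next
    case False
    then obtain i where i: "i < d - 1" "x!i \<noteq> y!i" by auto
    have iw: "length w \<le> i"
    proof (rule ccontr)
      assume "\<not> length w \<le> i"
      then have "i < length w" by simp
      then have "x!i = w!i" "y!i = w!i"
        using less.prems(3,4) nth_take[of i "length w" x] nth_take[of i "length w" y] by simp_all
      then show False using i by simp
    qed
    define x' where "x' = x[i := \<not> x!i]"
    have sx: "s d (take i x) x = x'" using i less.prems(1) d by (simp add: s_def x'_def)
    have D': "{j. j < d - 1 \<and> x'!j \<noteq> y!j} = ?D - {i}"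
      using i less.prems(1) by (auto simp: x'_def nth_list_update)
    have fin: "finite ?D" by (rule finite_subset[of _ "{..<d-1}"]) auto
    have "card (?D - {i}) < card ?D" using i fin by (intro card_Diff1_less) auto
    then have lt: "card {j. j < d - 1 \<and> x'!j \<noteq> y!j} < card ?D" using D' by simp
    have tx': "take (length w) x' = w" using iw less.prems(3) by (simp add: x'_def)
    have lx': "length x' = d - 1" using less.prems(1) by (simp add: x'_def)
    obtain \<tau>2 where t2: "is_aut d \<tau>2" "\<tau>2 x' = y" "\<forall>z. length z = d - 1 \<and> take (length w) z \<noteq> w \<longrightarrow> \<tau>2 z = z"
      using less.hyps[OF lt lx' less.prems(2) tx' less.prems(4)] by blast
    have fixs: "s d (take i x) z = z" if z: "length z = d - 1" "take (length w) z \<noteq> w" for z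
    proof -
      have "take i z \<noteq> take i x"
      proof
        assume "take i z = take i x"
        then have "take (length w) (take i z) = take (length w) (take i x)" by simp
        then have "take (length w) z = take (length w) x" using iw by (simp add: min_absorb1)
        then show False using z(2) less.prems(3) by simp
      qed
      then show ?thesis using i less.prems(1) z(1) by (simp add: s_def)
    qed
    show ?thesis
    proof (intro exI[of _ "\<tau>2 \<circ> s d (take i x)"] conjI allI impI)
      show "is_aut d (\<tau>2 \<circ> s d (take i x))" using t2(1) is_aut_s by (rule is_aut_comp)
      show "(\<tau>2 \<circ> s d (take i x)) x = y" using sx t2(2) by simp
      fix z assume "length z = d - 1 \<and> take (length w) z \<noteq> w"
      then show "(\<tau>2 \<circ> s d (take i x)) z = z" using fixs t2(3) by simp
    qed
  qed
qed

lemma block: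
  assumes S: "subgroup S (G d)" and F: "full d S" and d: "d \<ge> 1"
    and lu: "length u = d - 1" and lu': "length u' = d - 1"
    and tu: "take (Suc (length w)) u = w @ [b]" and tu': "take (Suc (length w)) u' = w @ [\<not> b]"
    and r: "R d S u u'" and lt: "length t = d - 1" and tt: "take (length w) t = w"
  shows "R d S t u"
proof -
  have "length (take (Suc (length w)) u) = Suc (length w)" using tu by simp
  then have lw: "length w < d - 1" using lu by simp
  have tt': "take (Suc (length w)) t = w @ [t ! length w]" using take_Suc_conv_app_nth[of "length w" t] tt lt lw by simp
  show ?thesis
  proof (cases "t ! length w = b")
    case True
    have a1: "take (length (w @ [b])) u = w @ [b]" using tu by simp
    have a2: "take (length (w @ [b])) t = w @ [b]" using tt' True by simp
    obtain \<tau> where tau: "is_aut d \<tau>" "\<tau> u = t" "\<forall>z. length z = d - 1 \<and> take (length (w @ [b])) z \<noteq> w @ [b] \<longrightarrow> \<tau> z = z"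
      using trans_leaf[OF d lu lt a1 a2] by blast
    have "\<tau> u' = u'" using tau(3) lu' tu' by auto
    then have "R d S t u'" using R_inv[OF S F d tau(1) lu lu' r] tau(2) by simp
    moreover have "R d S u' u" using R_sym[OF d lu lu' r] .
    ultimately show ?thesis using R_trans[OF S] by blast
  next
    case False
    have a1: "take (length (w @ [\<not> b])) u' = w @ [\<not> b]" using tu' by simp
    have a2: "take (length (w @ [\<not> b])) t = w @ [\<not> b]" using tt' False by simp
    obtain \<tau> where tau: "is_aut d \<tau>" "\<tau> u' = t" "\<forall>z. length z = d - 1 \<and> take (length (w @ [\<not> b])) z \<noteq> w @ [\<not> b] \<longrightarrow> \<tau> z = z"
      using trans_leaf[OF d lu' lt a1 a2] by blast
    have "\<tau> u = u" using tau(3) lu tu by auto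
    then have "R d S u t" using R_inv[OF S F d tau(1) lu lu' r] tau(2) by simp
    then show ?thesis using R_sym[OF d lu lt] by blast
  qed
qed


lemma take1: "length x \<ge> 1 \<Longrightarrow> take 1 x = [x ! 0]"
  by (cases x) auto

lemma half_lemma:
  assumes S: "subgroup S (G d)" and F: "full d S" and d: "d \<ge> 3"
    and r: "R d S (False # False # replicate (d - 3) False) (False # True # replicate (d - 3) False)"
  shows "\<forall>x y. length x = d - 1 \<longrightarrow> length y = d - 1 \<longrightarrow> x ! 0 = y ! 0 \<longrightarrow> R d S x y"
proof -
  have d1: "d \<ge> 1" using d by simp
  let ?r = "replicate (d - 3) False"
  have l: "length (a # b # ?r) = d - 1" for a b using d by simp
  have L: "R d S t (False # False # ?r)" if t: "length t = d - 1" "t ! 0 = False" for t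
  proof -
    have tt: "take (length [False]) t = [False]" using take1[of t] t d by simp
    show ?thesis
      by (rule block[OF S F d1 l l _ _ r t(1) tt, of False]) simp_all
  qed
  have r2: "R d S (s d [] (False # False # ?r)) (s d [] (False # True # ?r))"
    using R_inv[OF S F d1 is_aut_s l l r] .
  have e1: "s d [] (False # False # ?r) = True # False # ?r" using d by (simp add: s_def)
  have e2: "s d [] (False # True # ?r) = True # True # ?r" using d by (simp add: s_def)
  have r3: "R d S (True # False # ?r) (True # True # ?r)" using r2 e1 e2 by simp
  have Rt: "R d S t (True # False # ?r)" if t: "length t = d - 1" "t ! 0 = True" for t
  proof -
    have tt: "take (length [True]) t = [True]" using take1[of t] t d by simp
    show ?thesis
      by (rule block[OF S F d1 l l _ _ r3 t(1) tt, of False]) simp_all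
  qed
  show ?thesis
  proof (intro allI impI)
    fix x y :: word assume x: "length x = d - 1" and y: "length y = d - 1" and e: "x ! 0 = y ! 0"
    show "R d S x y"
    proof (cases "x ! 0")
      case True
      then have "R d S x (True # False # ?r)" "R d S y (True # False # ?r)" using Rt x y e by auto
      then show ?thesis using R_sym[OF d1 y l] R_trans[OF S] by blast
    next
      case False
      then have "R d S x (False # False # ?r)" "R d S y (False # False # ?r)" using L x y e by auto
      then show ?thesis using R_sym[OF d1 y l] R_trans[OF S] by blast
    qed
  qed
qed

definition qL :: "nat \<Rightarrow> word" where "qL d = replicate (d - 1) False"
definition qR :: "nat \<Rightarrow> word" where "qR d = True # replicate (d - 2) False"

definition E :: "nat \<Rightarrow> bool \<Rightarrow> bool \<Rightarrow> word \<Rightarrow> word" where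
  "E d \<alpha> \<beta> = (if \<alpha> then s d (qL d) else id) \<circ> (if \<beta> then s d (qR d) else id)"

lemma len_qL: "length (qL d) = d - 1" by (simp add: qL_def)
lemma len_qR: "d \<ge> 2 \<Longrightarrow> length (qR d) = d - 1" by (simp add: qR_def)

lemma E_K: "d \<ge> 2 \<Longrightarrow> E d \<alpha> \<beta> \<in> K d"
  unfolding E_def using s_in_K[of d "qL d"] s_in_K[of d "qR d"] id_in_K[of d] len_qL[of d] len_qR[of d]
  by (intro K_comp) auto

lemma EL: "s d (qL d) \<circ> E d \<alpha> \<beta> = E d (\<not> \<alpha>) \<beta>"
  by (cases \<alpha>) (simp_all add: E_def fun_eq_iff)

lemma ER: assumes "d \<ge> 2" shows "s d (qR d) \<circ> E d \<alpha> \<beta> = E d \<alpha> (\<not> \<beta>)"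
proof -
  have c: "s d (qR d) \<circ> s d (qL d) = s d (qL d) \<circ> s d (qR d)"
    using K_comm[of d] s_in_K[of d "qL d"] s_in_K[of d "qR d"] len_qL[of d] len_qR[OF assms] assms by simp
  show ?thesis
  proof (cases \<alpha>)
    case True
    have "s d (qR d) \<circ> E d True \<beta> = (s d (qR d) \<circ> s d (qL d)) \<circ> (if \<beta> then s d (qR d) else id)"
      by (simp add: E_def comp_assoc)
    also have "\<dots> = s d (qL d) \<circ> (s d (qR d) \<circ> (if \<beta> then s d (qR d) else id))" using c by (simp add: comp_assoc)
    also have "\<dots> = E d True (\<not> \<beta>)" by (cases \<beta>) (simp_all add: E_def s_comp_self)
    finally show ?thesis using True by simp
  next
    case False
    then show ?thesis by (cases \<beta>) (simp_all add: E_def fun_eq_iff)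
  qed
qed


definition Um :: "nat \<Rightarrow> (word \<Rightarrow> word) \<Rightarrow> word set" where
  "Um m g = {v. length v = m \<and> g (v @ [False]) \<noteq> v @ [False]}"

lemma finite_len: "finite {v :: bool list. length v = n}"
  using finite_lists_length_eq[of "UNIV::bool set" n] by simp

lemma finite_Um: "finite (Um m g)"
  by (rule finite_subset[OF _ finite_len[of m]]) (auto simp: Um_def)

lemma s_word:
  assumes "length x = m" "length v = m" "m < N"
  shows "s N x (v @ [c]) = (if v = x then v @ [\<not> c] else v @ [c])"
proof -
  have "Suc m \<le> N" using assms by simp
  then show ?thesis using assms by (auto simp: s_def list_update_append)
qed

lemma s_fix_short: "length t \<le> length v \<Longrightarrow> s N v t = t"
  by (simp add: s_def)

lemma Um_step:
  assumes g: "is_aut N g" and fx: "\<forall>t. length t \<le> m \<longrightarrow> g t = t" and m: "m < N" and x: "x \<in> Um m g"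
  shows "Um m (s N x \<circ> g) = Um m g - {x}"
proof -
  have lx: "length x = m" using x by (simp add: Um_def)
  have gx: "g (x @ [False]) = x @ [True]" using x level_cases[OF g fx m lx, of False] by (auto simp: Um_def)
  have "v \<in> Um m (s N x \<circ> g) \<longleftrightarrow> v \<in> Um m g - {x}" for v
  proof (cases "length v = m")
    case True
    show ?thesis
    proof (cases "v = x")
      case True
      then show ?thesis using gx s_word[OF lx lx m, of True] by (simp add: Um_def)
    next
      case False
      have "(s N x \<circ> g) (v @ [False]) = g (v @ [False])"
        using level_cases[OF g fx m \<open>length v = m\<close>, of False] s_word[OF lx \<open>length v = m\<close> m] False by auto
      then show ?thesis using False by (simp add: Um_def)
    qed
  next
    case False then show ?thesis by (simp add: Um_def)
  qed
  then show ?thesis by blast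
qed

lemma Um_empty:
  assumes g: "is_aut N g" and fx: "\<forall>t. length t \<le> m \<longrightarrow> g t = t" and m: "m < N" and e: "Um m g = {}"
  shows "\<forall>t. length t \<le> Suc m \<longrightarrow> g t = t"
proof (intro allI impI)
  fix t :: word assume t: "length t \<le> Suc m"
  show "g t = t"
  proof (cases "length t = Suc m")
    case True
    then have tt: "t = take m t @ [t ! m]" by (rule split_last_len)
    have lv: "length (take m t) = m" using True by simp
    have "g (take m t @ [False]) = take m t @ [False]" using e lv by (auto simp: Um_def)
    then have "g (take m t @ [b]) = take m t @ [b]" for b
      using level_iff[OF g fx m lv, of False] by (cases b) auto
    then show ?thesis using tt by metis
  next
    case False then show ?thesis using fx t by simp
  qed
qed

lemma s_comp_move: "g' = s N x \<circ> g \<Longrightarrow> g = s N x \<circ> g'"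
  by (simp add: fun_eq_iff)

lemma level_induct:
  assumes Rid: "id \<in> RR" and Rc: "\<And>f g. f \<in> RR \<Longrightarrow> g \<in> RR \<Longrightarrow> f \<circ> g \<in> RR"
    and Rs: "\<And>v. length v < N \<Longrightarrow> s N v \<in> RR"
  shows "is_aut N g \<Longrightarrow> \<forall>t. length t \<le> m \<longrightarrow> g t = t \<Longrightarrow> g \<in> RR"
proof (induction "N - m" arbitrary: m g rule: less_induct)
  case less
  show ?case
  proof (cases "m < N")
    case False
    have "g = id"
    proof
      fix t show "g t = id t"
        using less.prems is_aut_off[OF less.prems(1), of t] False by (cases "length t \<le> m") auto
    qed
    then show ?thesis using Rid by simp
  next
    case True
    have "\<And>g. is_aut N g \<Longrightarrow> \<forall>t. length t \<le> m \<longrightarrow> g t = t \<Longrightarrow> card (Um m g) = c \<Longrightarrow> g \<in> RR" for c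
    proof (induction c)
      case 0
      then have "Um m g = {}" using finite_Um by simp
      then have "\<forall>t. length t \<le> Suc m \<longrightarrow> g t = t" using Um_empty[OF 0(1,2) True] by blast
      then show ?case using less.hyps[of "Suc m"] True 0(1) by simp
    next
      case (Suc c)
      then have "Um m g \<noteq> {}" by auto
      then obtain x where x: "x \<in> Um m g" by blast
      have lx: "length x = m" using x by (simp add: Um_def)
      let ?g' = "s N x \<circ> g"
      have a': "is_aut N ?g'" using is_aut_comp[OF is_aut_s Suc.prems(1)] .
      have f': "\<forall>t. length t \<le> m \<longrightarrow> ?g' t = t" using Suc.prems(2) s_fix_short lx by simp
      have "card (Um m ?g') = c" using Um_step[OF Suc.prems(1,2) True x] Suc.prems(3) x finite_Um by simp
      then have "?g' \<in> RR" using Suc.IH[OF a' f'] by blast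
      moreover have "s N x \<in> RR" using Rs lx True by simp
      ultimately have "s N x \<circ> ?g' \<in> RR" using Rc by blast
      then show ?case by (simp add: comp_assoc[symmetric] s_comp_self)
    qed
    then show ?thesis using less.prems by blast
  qed
qed

lemma s_gen:
  assumes Rc: "\<And>f g. f \<in> RR \<Longrightarrow> g \<in> RR \<Longrightarrow> f \<circ> g \<in> RR"
    and Ra: "\<And>i. i < N \<Longrightarrow> a N i \<in> RR"
  shows "length v < N \<Longrightarrow> s N v \<in> RR"
proof (induction "length v + card {j. j < length v \<and> v ! j}" arbitrary: v rule: less_induct)
  case less
  show ?case
  proof (cases "\<exists>i < length v. v ! i")
    case False
    then have "v = replicate (length v) False" by (auto intro: nth_equalityI)
    then show ?thesis using Ra[of "length v"] less.prems a_eq_s by metis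
  next
    case True
    then obtain i where i: "i < length v" "v ! i" by blast
    let ?A = "{j. j < length v \<and> v ! j}"
    have fin: "finite ?A" by (rule finite_subset[of _ "{..<length v}"]) auto
    have iA: "i \<in> ?A" using i by simp
    have c1: "card {j. j < length (take i v) \<and> take i v ! j} < card ?A"
    proof -
      have "{j. j < length (take i v) \<and> take i v ! j} \<subseteq> ?A - {i}" using i by auto
      then have "card {j. j < length (take i v) \<and> take i v ! j} \<le> card (?A - {i})"
        using fin by (intro card_mono) auto
      also have "\<dots> < card ?A" using fin iA by (intro card_Diff1_less)
      finally show ?thesis .
    qed
    have c2: "{j. j < length (v[i := False]) \<and> v[i := False] ! j} = ?A - {i}"
      using i by (auto simp: nth_list_update)
    have c2': "card (?A - {i}) < card ?A" using fin iA by (intro card_Diff1_less)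
    have h1: "s N (take i v) \<in> RR" using less.hyps[of "take i v"] c1 i less.prems by simp
    have h2: "s N (v[i := False]) \<in> RR" using less.hyps[of "v[i := False]"] c2 c2' less.prems by simp
    have "s N (take i v) \<circ> s N (v[i := False]) \<circ> s N (take i v) \<in> RR" using Rc h1 h2 by blast
    then show ?thesis using s_conj[OF i] by simp
  qed
qed

lemma gen_all:
  assumes Rid: "id \<in> RR" and Rc: "\<And>f g. f \<in> RR \<Longrightarrow> g \<in> RR \<Longrightarrow> f \<circ> g \<in> RR"
    and Ra: "\<And>i. i < N \<Longrightarrow> a N i \<in> RR"
  shows "is_aut N g \<Longrightarrow> g \<in> RR"
  using level_induct[OF Rid Rc s_gen[OF Rc Ra], of g 0] is_aut_len'[of N g "[]"] by simp


lemma K_id: assumes d: "d \<ge> 1" and k: "k \<in> K d" and e: "Um (d - 1) k = {}" shows "k = id"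
proof
  fix t
  have ka: "is_aut d k" and kf: "\<forall>t. length t \<le> d - 1 \<longrightarrow> k t = t" using k by (auto simp: K_def)
  have "\<forall>t. length t \<le> Suc (d - 1) \<longrightarrow> k t = t" using Um_empty[OF ka kf _ e] d by simp
  then show "k t = id t" using is_aut_off[OF ka, of t] d by (cases "length t \<le> d") auto
qed

lemma K_decomp:
  assumes S: "subgroup S (G d)" and d: "d \<ge> 2"
    and W: "\<forall>x y. length x = d - 1 \<longrightarrow> length y = d - 1 \<longrightarrow> x ! 0 = y ! 0 \<longrightarrow> R d S x y"
  shows "k \<in> K d \<Longrightarrow> \<exists>\<alpha> \<beta>. k \<circ> E d \<alpha> \<beta> \<in> S"
proof (induction "card (Um (d - 1) k)" arbitrary: k)
  case 0
  then have "Um (d - 1) k = {}" using finite_Um by simp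
  then have "k = id" using K_id[OF _ 0(2)] d by simp
  then have "k \<circ> E d False False \<in> S" using subgroup.one_closed[OF S] by (simp add: E_def)
  then show ?case by blast
next
  case (Suc c)
  then have "Um (d - 1) k \<noteq> {}" by auto
  then obtain x where x: "x \<in> Um (d - 1) k" by blast
  have lx: "length x = d - 1" using x by (simp add: Um_def)
  have ka: "is_aut d k" and kf: "\<forall>t. length t \<le> d - 1 \<longrightarrow> k t = t" using Suc.prems by (auto simp: K_def)
  let ?k' = "s d x \<circ> k"
  have k'K: "?k' \<in> K d" using K_comp[OF s_in_K Suc.prems] lx by simp
  have "card (Um (d - 1) ?k') = c" using Um_step[OF ka kf _ x] d Suc.hyps(2) x finite_Um by simp
  then obtain \<alpha> \<beta> where ih: "?k' \<circ> E d \<alpha> \<beta> \<in> S" using Suc.hyps(1)[OF _ k'K] by metis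
  have kk: "k = s d x \<circ> ?k'" by (simp add: comp_assoc[symmetric] s_comp_self)
  have d1: "d \<ge> 1" using d by simp
  show ?case
  proof (cases "x ! 0")
    case True
    have "R d S x (qR d)" using W lx len_qR[OF d] True by (simp add: qR_def)
    then have xr: "s d x \<circ> s d (qR d) \<in> S" by (simp add: R_def)
    have cm: "?k' \<circ> s d (qR d) = s d (qR d) \<circ> ?k'" using K_comm[OF d1 k'K s_in_K] len_qR[OF d] by simp
    have "k \<circ> E d \<alpha> (\<not> \<beta>) = (s d x \<circ> s d (qR d)) \<circ> (?k' \<circ> E d \<alpha> \<beta>)"
    proof -
      have "k \<circ> E d \<alpha> (\<not> \<beta>) = s d x \<circ> (?k' \<circ> s d (qR d)) \<circ> E d \<alpha> \<beta>"
        using kk ER[OF d, of \<alpha> \<beta>] by (metis comp_assoc)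
      also have "\<dots> = (s d x \<circ> s d (qR d)) \<circ> (?k' \<circ> E d \<alpha> \<beta>)" using cm by (simp add: comp_assoc)
      finally show ?thesis .
    qed
    also have "\<dots> \<in> S" using subgroup.m_closed[OF S xr ih] by simp
    finally show ?thesis by blast
  next
    case False
    have "R d S x (qL d)" using W lx len_qL[of d] False d by (simp add: qL_def)
    then have xr: "s d x \<circ> s d (qL d) \<in> S" by (simp add: R_def)
    have cm: "?k' \<circ> s d (qL d) = s d (qL d) \<circ> ?k'" using K_comm[OF d1 k'K s_in_K] len_qL[of d] by simp
    have "k \<circ> E d (\<not> \<alpha>) \<beta> = (s d x \<circ> s d (qL d)) \<circ> (?k' \<circ> E d \<alpha> \<beta>)"
    proof -
      have "k \<circ> E d (\<not> \<alpha>) \<beta> = s d x \<circ> (?k' \<circ> s d (qL d)) \<circ> E d \<alpha> \<beta>"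
        using kk EL[of d \<alpha> \<beta>] by (metis comp_assoc)
      also have "\<dots> = (s d x \<circ> s d (qL d)) \<circ> (?k' \<circ> E d \<alpha> \<beta>)" using cm by (simp add: comp_assoc)
      finally show ?thesis .
    qed
    also have "\<dots> \<in> S" using subgroup.m_closed[OF S xr ih] by simp
    finally show ?thesis by blast
  qed
qed

lemma restr_aut: assumes g: "is_aut d g" and k: "k \<le> d" shows "is_aut k (restr k g)"
proof -
  have len: "length (restr k g w) = length w" for w using is_aut_len'[OF g] by (simp add: restr_def)
  have B: "bij_betw (restr k g) (tree k) (tree k)"
  proof (rule bij_betwI[where g="restr k (ginv d g)"])
    show "restr k g \<in> tree k \<rightarrow> tree k" using len by (simp add: Pi_def)
    have "length (restr k (ginv d g) w) = length w" for w
      using is_aut_len'[OF is_aut_ginv[OF g]] by (simp add: restr_def)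
    then show "restr k (ginv d g) \<in> tree k \<rightarrow> tree k" by (simp add: Pi_def)
    fix x assume "x \<in> tree k"
    then show "restr k (ginv d g) (restr k g x) = x"
      using ginv_left[OF g] is_aut_len'[OF g] by (simp add: restr_def)
  next
    fix y assume "y \<in> tree k"
    then show "restr k g (restr k (ginv d g) y) = y"
      using ginv_right[OF g] is_aut_len'[OF is_aut_ginv[OF g]] by (simp add: restr_def)
  qed
  have PR: "\<forall>v w. v @ w \<in> tree k \<longrightarrow> (\<exists>u. restr k g (v @ w) = restr k g v @ u)"
  proof (intro allI impI)
    fix v w assume "v @ w \<in> tree k"
    then have "length (v @ w) \<le> d" "length (v @ w) \<le> k" using k by auto
    then obtain u where "g (v @ w) = g v @ u" using is_aut_pre[OF g] by blast
    then show "\<exists>u. restr k g (v @ w) = restr k g v @ u" using \<open>length (v @ w) \<le> k\<close> by (auto simp: restr_def)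
  qed
  have O: "\<forall>w. w \<notin> tree k \<longrightarrow> restr k g w = w" by (simp add: restr_def)
  have L: "\<forall>w\<in>tree k. length (restr k g w) = length w" using len by blast
  show ?thesis unfolding is_aut_def using B PR O L by (intro conjI)
qed

lemma restr_id: "restr k id = id" by (simp add: restr_def fun_eq_iff)

lemma restr_K: "\<kappa> \<in> K d \<Longrightarrow> restr (d - 1) \<kappa> = id"
  by (auto simp: restr_def K_def fun_eq_iff)

lemma coset_eqD:
  assumes S: "subgroup P (G d)" and x: "x \<in> carrier (G d)" and y: "y \<in> carrier (G d)"
    and e: "P #>\<^bsub>G d\<^esub> x = P #>\<^bsub>G d\<^esub> y"
  shows "x \<otimes>\<^bsub>G d\<^esub> inv\<^bsub>G d\<^esub> y \<in> P"
proof -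
  have "x \<in> P #>\<^bsub>G d\<^esub> y" using group.rcos_self[OF group_G x S] e by simp
  then show ?thesis using subgroup.rcos_module_imp[OF S group_G y] by blast
qed

lemma coset_eqI:
  assumes S: "subgroup P (G d)" and x: "x \<in> carrier (G d)" and y: "y \<in> carrier (G d)"
    and e: "x \<otimes>\<^bsub>G d\<^esub> inv\<^bsub>G d\<^esub> y \<in> P"
  shows "P #>\<^bsub>G d\<^esub> x = P #>\<^bsub>G d\<^esub> y"
proof -
  have "x \<in> P #>\<^bsub>G d\<^esub> y" using subgroup.rcos_module_rev[OF S group_G y x e] .
  then show ?thesis using group.repr_independence[OF group_G _ y S] by metis
qed

lemma E_invol: assumes d: "d \<ge> 2" shows "E d \<alpha> \<beta> \<circ> E d \<alpha> \<beta> = id"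
proof -
  show ?thesis
  proof (cases \<alpha>; cases \<beta>)
    assume "\<alpha>" "\<beta>"
    have c: "s d (qR d) \<circ> s d (qL d) = s d (qL d) \<circ> s d (qR d)"
      using K_comm[of d] s_in_K[of d "qL d"] s_in_K[of d "qR d"] len_qL[of d] len_qR[OF d] d by simp
    have "E d \<alpha> \<beta> \<circ> E d \<alpha> \<beta> = s d (qL d) \<circ> (s d (qR d) \<circ> s d (qL d)) \<circ> s d (qR d)"
      using \<open>\<alpha>\<close> \<open>\<beta>\<close> by (simp add: E_def comp_assoc)
    also have "\<dots> = id" using c by (simp add: comp_assoc[symmetric] s_comp_self)
    finally show ?thesis .
  qed (simp_all add: E_def s_comp_self)
qed


lemma a_aut: "a d i \<in> carrier (G d)" by (simp add: a_eq_s is_aut_s)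

lemma inv_a: "inv\<^bsub>G d\<^esub> (a d i) = a d i" by (simp add: a_eq_s inv_s)

lemma rep_split: "d \<ge> 2 \<Longrightarrow> replicate (d - 1) False = False # replicate (d - 2) False"
proof -
  assume "d \<ge> 2"
  then have "d - 1 = Suc (d - 2)" by simp
  then show ?thesis by simp
qed

lemma s_qR_conj: assumes d: "d \<ge> 2" shows "s d [] \<circ> s d (qL d) \<circ> s d [] = s d (qR d)"
proof -
  have "0 < length (qR d)" "qR d ! 0" by (simp_all add: qR_def)
  from s_conj[OF this] have "s d (take 0 (qR d)) \<circ> s d ((qR d)[0 := False]) \<circ> s d (take 0 (qR d)) = s d (qR d)" .
  moreover have "(qR d)[0 := False] = qL d" using rep_split[OF d] by (simp add: qR_def qL_def)
  ultimately show ?thesis by simp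
qed

lemma z0: "z d 0 = E d False False" by (simp add: z_def E_def)
lemma z1: "z d 1 = E d True False" by (simp add: z_def E_def a_eq_s qL_def)
lemma z2: "d \<ge> 2 \<Longrightarrow> z d 2 = E d False True"
  using s_qR_conj[of d] by (simp add: z_def E_def conj_def inv_a) (simp add: a_eq_s qL_def)
lemma z3: assumes d: "d \<ge> 2" shows "z d 3 = E d True True"
proof -
  have "z d 3 = s d [] \<circ> s d (qL d) \<circ> s d [] \<circ> s d (qL d)"
    by (simp add: z_def comm_def inv_a) (simp add: a_eq_s qL_def)
  also have "\<dots> = s d (qR d) \<circ> s d (qL d)" using s_qR_conj[OF d] by simp
  also have "\<dots> = s d (qL d) \<circ> s d (qR d)"
    using K_comm[of d] s_in_K[of d "qL d"] s_in_K[of d "qR d"] len_qL[of d] len_qR[OF d] d by simp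
  finally show ?thesis by (simp add: E_def)
qed

lemma z_E: "d \<ge> 2 \<Longrightarrow> \<exists>j<4. z d j = E d \<alpha> \<beta>"
proof -
  assume d: "d \<ge> 2"
  show ?thesis
  proof (cases \<alpha>; cases \<beta>)
    assume "\<alpha>" "\<beta>" then show ?thesis using z3[OF d] by (intro exI[of _ 3]) simp
  next
    assume "\<alpha>" "\<not>\<beta>" then show ?thesis using z1[of d] by (intro exI[of _ 1]) simp
  next
    assume "\<not>\<alpha>" "\<beta>" then show ?thesis using z2[OF d] by (intro exI[of _ 2]) simp
  next
    assume "\<not>\<alpha>" "\<not>\<beta>" then show ?thesis using z0[of d] by (intro exI[of _ 0]) simp
  qed
qed

lemma comm1_3: assumes d: "d \<ge> 3"
  shows "comm (G d) (a d 1) (a d (d - 1)) = s d (False # True # replicate (d - 3) False) \<circ> s d (False # False # replicate (d - 3) False)"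
proof -
  let ?v = "False # True # replicate (d - 3) False"
  have rr: "replicate (d - Suc 0) False = False # False # replicate (d - 3) False"
  proof -
    have "d - Suc 0 = Suc (Suc (d - 3))" using d by simp
    then show ?thesis by simp
  qed
  have "1 < length ?v" "?v ! 1" using d by simp_all
  from s_conj[OF this, of d] have c: "s d [False] \<circ> s d (False # False # replicate (d - 3) False) \<circ> s d [False] = s d ?v"
    by simp
  have "comm (G d) (a d 1) (a d (d - 1)) = s d [False] \<circ> s d (False # False # replicate (d - 3) False) \<circ> s d [False] \<circ> s d (False # False # replicate (d - 3) False)"
    by (simp add: comm_def inv_a) (simp add: a_eq_s rr)
  then show ?thesis using c by simp
qed

lemma comm1_2: "comm (G 2) (a 2 1) (a 2 (2 - 1)) = id"
  by (simp add: comm_def inv_a) (simp add: a_eq_s s_comp_self comp_assoc[symmetric])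


lemma card_bool2: "card (UNIV :: (bool \<times> bool) set) = 4"
proof -
  have eq: "(UNIV :: (bool \<times> bool) set) = {(False,False),(False,True),(True,False),(True,True)}" by auto
  show ?thesis unfolding eq by simp
qed

lemma K_carrier: "\<kappa> \<in> K d \<Longrightarrow> \<kappa> \<in> carrier (G d)" by (simp add: K_def)

lemma P_one: "subgroup P (G d) \<Longrightarrow> P #>\<^bsub>G d\<^esub> id = P"
  using group.coset_mult_one[OF group_G, of P d] subgroup.subset by fastforce

lemma rc_P: "subgroup P (G d) \<Longrightarrow> P \<in> rcosets\<^bsub>G d\<^esub> P"
  using group.rcosetsI[OF group_G, of P d id] subgroup.subset[of P "G d"] P_one[of P d] by (simp add: is_aut_id)

lemma partA:
  assumes S: "subgroup P (G d)" and F: "full d P" and d: "d \<ge> 3" and c: "card (rcosets\<^bsub>G d\<^esub> P) = 4"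
  shows "R d P (False # False # replicate (d - 3) False) (False # True # replicate (d - 3) False)"
proof (rule ccontr)
  assume nr: "\<not> ?thesis"
  define r where "r a b = a # b # replicate (d - 3) False" for a b
  have d1: "d \<ge> 1" using d by simp
  have l: "length (r a b) = d - 1" for a b using d by (simp add: r_def)
  have nr': "\<not> R d P (r False False) (r False True)" using nr by (simp add: r_def)
  have cross: "\<not> R d P (r a b) (r (\<not> a) b')" for a b b'
  proof
    assume h: "R d P (r a b) (r (\<not> a) b')"
    have all: "R d P t (r a b)" if "length t = d - 1" for t
      by (rule block[OF S F d1 l l _ _ h that, of "[]" a]) (simp_all add: r_def)
    then have "R d P (r False False) (r a b)" "R d P (r False True) (r a b)" using l by auto
    then have "R d P (r False False) (r False True)" using R_sym[OF d1 l l] R_trans[OF S] by blast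
    then show False using nr' by simp
  qed
  have n1: "\<not> R d P (r True False) (r True True)"
  proof
    assume h: "R d P (r True False) (r True True)"
    have "R d P (s d [] (r True False)) (s d [] (r True True))" using R_inv[OF S F d1 is_aut_s l l h] .
    moreover have "s d [] (r True b) = r False b" for b using d by (simp add: s_def r_def)
    ultimately show False using nr' by simp
  qed
  have dist: "\<not> R d P (r a b) (r a' b')" if "(a, b) \<noteq> (a', b')" for a b a' b'
  proof (cases "a = a'")
    case False
    then have "a' = (\<not> a)" by auto
    then show ?thesis using cross by simp
  next
    case True
    then have "b' = (\<not> b)" using that by auto
    then show ?thesis using True nr' n1 R_sym[OF d1 l l]
      by (cases a; cases b) auto
  qed
  define C where "C ab = P #>\<^bsub>G d\<^esub> s d (r (fst ab) (snd ab))" for ab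
  have scar: "s d x \<in> carrier (G d)" for x by (simp add: is_aut_s)
  have inj: "inj C"
  proof
    fix x y assume "C x = C y"
    then have "s d (r (fst x) (snd x)) \<otimes>\<^bsub>G d\<^esub> inv\<^bsub>G d\<^esub> s d (r (fst y) (snd y)) \<in> P"
      unfolding C_def using coset_eqD[OF S scar scar] by blast
    then have "R d P (r (fst x) (snd x)) (r (fst y) (snd y))" by (simp add: inv_s R_def)
    then show "x = y" using dist[of "fst x" "snd x" "fst y" "snd y"] by (cases x; cases y) auto
  qed
  have notP: "P \<notin> range C"
  proof
    assume "P \<in> range C"
    then obtain a b where "P = P #>\<^bsub>G d\<^esub> s d (r a b)" unfolding C_def by auto
    then have "P #>\<^bsub>G d\<^esub> id = P #>\<^bsub>G d\<^esub> s d (r a b)" using P_one[OF S] by simp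
    moreover have idc: "id \<in> carrier (G d)" by (simp add: is_aut_id)
    ultimately have "id \<otimes>\<^bsub>G d\<^esub> inv\<^bsub>G d\<^esub> s d (r a b) \<in> P" using coset_eqD[OF S idc scar] by blast
    then have sP: "s d (r a b) \<in> P" by (simp add: inv_s)
    have "s d t \<in> P" if t: "length t = d - 1" for t
    proof -
      obtain \<tau> where tau: "is_aut d \<tau>" "\<tau> (r a b) = t"
        using trans_leaf[OF d1 l t, of "[]"] by auto
      show ?thesis using single_inv[OF S F d1 tau(1) l sP] tau(2) by simp
    qed
    then have "s d (r False False) \<circ> s d (r False True) \<in> P"
      using subgroup.m_closed[OF S] l by (metis G_mult)
    then show False using nr' by (simp add: R_def)
  qed
  have sub: "insert P (range C) \<subseteq> rcosets\<^bsub>G d\<^esub> P"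
    using rc_P[OF S] group.rcosetsI[OF group_G subgroup.subset[OF S] scar] by (auto simp: C_def)
  have fin: "finite (rcosets\<^bsub>G d\<^esub> P)" using c card.infinite by fastforce
  have "card (range C) = 4" using card_image[OF inj_on_subset[OF inj subset_UNIV]] card_bool2 by simp
  then have "card (insert P (range C)) = 5" using notP finite_subset[OF _ fin] sub by simp
  then show False using card_mono[OF fin sub] c by simp
qed

lemma coset_unique:
  assumes S: "subgroup P (G d)" and F: "full d P" and d: "d \<ge> 2"
    and W: "\<forall>x y. length x = d - 1 \<longrightarrow> length y = d - 1 \<longrightarrow> x ! 0 = y ! 0 \<longrightarrow> R d P x y"
    and c: "card (rcosets\<^bsub>G d\<^esub> P) = 4" and e: "E d \<alpha> \<beta> \<in> P"
  shows "\<not> \<alpha> \<and> \<not> \<beta>"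
proof -
  define f where "f ab = P #>\<^bsub>G d\<^esub> E d (fst ab) (snd ab)" for ab
  have Ec: "E d a b \<in> carrier (G d)" for a b using E_K[OF d] K_carrier by blast
  have Ei: "inv\<^bsub>G d\<^esub> (E d a b) = E d a b" for a b using inv_G_invol[OF Ec E_invol[OF d]] .
  have sub0: "P #>\<^bsub>G d\<^esub> g \<in> range f" if g1: "g \<in> carrier (G d)" for g
  proof -
    define Y0 where "Y0 = P #>\<^bsub>G d\<^esub> g"
    have g: "g \<in> carrier (G d)" "Y0 = P #>\<^bsub>G d\<^esub> g" using g1 Y0_def by auto
    obtain \<sigma> where sig: "\<sigma> \<in> P" "restr (d - 1) \<sigma> = restr (d - 1) g" using full_get[OF F] g(1) by auto
    have sc: "\<sigma> \<in> carrier (G d)" using subgroup.subset[OF S] sig(1) by blast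
    have ic: "inv\<^bsub>G d\<^esub> \<sigma> \<in> carrier (G d)" using inv_G_carrier[OF sc] .
    let ?k = "inv\<^bsub>G d\<^esub> \<sigma> \<circ> g"
    have kK: "?k \<in> K d"
    proof -
      have "is_aut d ?k" using is_aut_comp ic g(1) by simp
      moreover have "?k t = t" if "length t \<le> d - 1" for t
      proof -
        have "g t = \<sigma> t" using restr_eq_app[OF sig(2) that] by simp
        then show ?thesis using fun_cong[OF inv_G_left[OF sc], of t] by simp
      qed
      ultimately show ?thesis by (simp add: K_def)
    qed
    obtain a b where ab: "?k \<circ> E d a b \<in> P" using K_decomp[OF S d W kK] by blast
    have "\<sigma> \<circ> (?k \<circ> E d a b) \<in> P" using subgroup.m_closed[OF S sig(1) ab] by simp
    moreover have "\<sigma> \<circ> (?k \<circ> E d a b) = g \<circ> E d a b"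
      using inv_G_right[OF sc] by (simp add: comp_assoc[symmetric])
    ultimately have "g \<otimes>\<^bsub>G d\<^esub> inv\<^bsub>G d\<^esub> (E d a b) \<in> P" by (simp add: Ei)
    then have "Y0 = f (a, b)" using coset_eqI[OF S g(1) Ec] g(2) by (simp add: f_def)
    then show ?thesis using Y0_def by blast
  qed
  have sub: "rcosets\<^bsub>G d\<^esub> P \<subseteq> range f" using sub0 by (auto simp: RCOSETS_def)
  have sup: "range f \<subseteq> rcosets\<^bsub>G d\<^esub> P"
    using group.rcosetsI[OF group_G subgroup.subset[OF S] Ec] by (auto simp: f_def)
  have "range f = rcosets\<^bsub>G d\<^esub> P" using sub sup by blast
  then have "card (f ` UNIV) = card (UNIV :: (bool \<times> bool) set)" using c card_bool2 by simp
  then have inj: "inj f" by (rule eq_card_imp_inj_on[OF finite])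
  have "f (\<alpha>, \<beta>) = P" using group.coset_join2[OF group_G Ec S e] by (simp add: f_def)
  moreover have "f (False, False) = P" using P_one[OF S] by (simp add: f_def E_def)
  ultimately have "(\<alpha>, \<beta>) = (False, False)" using inj by (metis injD)
  then show ?thesis by simp
qed


lemma z_cases: assumes d: "d \<ge> 2" and j: "j < 4" shows "\<exists>\<alpha> \<beta>. z d j = E d \<alpha> \<beta>"
proof -
  have "j = 0 \<or> j = 1 \<or> j = 2 \<or> j = 3" using j by auto
  then show ?thesis using z0[of d] z1[of d] z2[OF d] z3[OF d] by blast
qed

lemma same_half_2:
  "\<forall>x y. length x = 2 - 1 \<longrightarrow> length y = 2 - 1 \<longrightarrow> x ! 0 = y ! 0 \<longrightarrow> R 2 S x y"
  if "subgroup S (G 2)"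
proof (intro allI impI)
  fix x y :: word assume "length x = 2 - 1" "length y = 2 - 1" "x ! 0 = y ! 0"
  then have "x = y" by (intro nth_equalityI) auto
  then show "R 2 S x y" using R_refl[OF that] by simp
qed

lemma K_of_inv:
  assumes hc: "h \<in> carrier (G d)" and pc: "p \<in> carrier (G d)" and r: "restr (d - 1) h = restr (d - 1) p"
  shows "inv\<^bsub>G d\<^esub> h \<circ> p \<in> K d"
proof -
  have ic: "inv\<^bsub>G d\<^esub> h \<in> carrier (G d)" using inv_G_carrier[OF hc] .
  have "is_aut d (inv\<^bsub>G d\<^esub> h \<circ> p)" using is_aut_comp ic pc by simp
  moreover have "(inv\<^bsub>G d\<^esub> h \<circ> p) t = t" if "length t \<le> d - 1" for t
  proof -
    have "p t = h t" using restr_eq_app[OF r that] by simp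
    then show ?thesis using fun_cong[OF inv_G_left[OF hc], of t] by simp
  qed
  ultimately show ?thesis by (simp add: K_def)
qed

theorem mainTheorem10:
  fixes d :: nat and P :: "(word \<Rightarrow> word) set"
  assumes "d \<ge> 2"
    and "essential_pattern d P"
    and "restr (d - 1) ` P = carrier (G (d - 1))"
    and "card (rcosets\<^bsub>G d\<^esub> P) = 4"
  shows "\<exists>k :: nat \<Rightarrow> nat. (\<forall>i \<le> d - 2. k i \<in> {0, 1, 2, 3}) \<and>
           P = generate (G d) ({a d i \<otimes>\<^bsub>G d\<^esub> z d (k i) | i. i \<le> d - 2}
                               \<union> {comm (G d) (a d 1) (a d (d - 1))})"
proof -
  have d2: "d \<ge> 2" using assms(1) .
  have d1: "d \<ge> 1" using d2 by simp
  have S: "subgroup P (G d)" using assms(2) by (simp add: essential_pattern_def)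
  have FP: "full d P" unfolding full_def
  proof (intro allI impI)
    fix \<tau> assume "is_aut d \<tau>"
    then have "restr (d - 1) \<tau> \<in> carrier (G (d - 1))" using restr_aut[of d \<tau> "d - 1"] by simp
    then show "\<exists>\<sigma>\<in>P. restr (d - 1) \<sigma> = restr (d - 1) \<tau>" using assms(3) by (metis imageE)
  qed
  let ?L = "False # False # replicate (d - 3) False" and ?M = "False # True # replicate (d - 3) False"
  have WP: "\<forall>x y. length x = d - 1 \<longrightarrow> length y = d - 1 \<longrightarrow> x ! 0 = y ! 0 \<longrightarrow> R d P x y"
  proof (cases "d = 2")
    case True then show ?thesis using same_half_2[of P] S by simp
  next
    case False
    then have d3: "d \<ge> 3" using d2 by simp
    show ?thesis using half_lemma[OF S FP d3 partA[OF S FP d3 assms(4)]] .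
  qed
  have choose: "\<forall>i. \<exists>j. i \<le> d - 2 \<longrightarrow> j < 4 \<and> a d i \<otimes>\<^bsub>G d\<^esub> z d j \<in> P"
  proof
    fix i
    obtain \<sigma> where sig: "\<sigma> \<in> P" "restr (d - 1) \<sigma> = restr (d - 1) (a d i)"
      using full_get[OF FP] a_aut[of d i] by auto
    have sc: "\<sigma> \<in> carrier (G d)" using subgroup.subset[OF S] sig(1) by blast
    let ?k = "\<sigma> \<circ> a d i"
    have kK: "?k \<in> K d"
    proof -
      have "is_aut d ?k" using is_aut_comp sc a_aut[of d i] by simp
      moreover have "?k t = t" if "length t \<le> d - 1" for t
      proof -
        have "length (a d i t) \<le> d - 1" using that by (simp add: a_eq_s)
        then have "\<sigma> (a d i t) = a d i (a d i t)" using restr_eq_app[OF sig(2)] by blast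
        then show ?thesis by (simp add: a_eq_s)
      qed
      ultimately show ?thesis by (simp add: K_def)
    qed
    obtain \<alpha> \<beta> where ab: "?k \<circ> E d \<alpha> \<beta> \<in> P" using K_decomp[OF S d2 WP kK] by blast
    have "inv\<^bsub>G d\<^esub> \<sigma> \<circ> (?k \<circ> E d \<alpha> \<beta>) \<in> P"
      using subgroup.m_closed[OF S subgroup.m_inv_closed[OF S sig(1)] ab] by simp
    moreover have "inv\<^bsub>G d\<^esub> \<sigma> \<circ> (?k \<circ> E d \<alpha> \<beta>) = a d i \<circ> E d \<alpha> \<beta>"
      using inv_G_left[OF sc] by (simp add: comp_assoc[symmetric])
    ultimately have "a d i \<circ> E d \<alpha> \<beta> \<in> P" by simp
    moreover obtain j where "j < 4" "z d j = E d \<alpha> \<beta>" using z_E[OF d2] by blast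
    ultimately show "\<exists>j. i \<le> d - 2 \<longrightarrow> j < 4 \<and> a d i \<otimes>\<^bsub>G d\<^esub> z d j \<in> P" by auto
  qed
  obtain k where k: "\<forall>i. i \<le> d - 2 \<longrightarrow> k i < 4 \<and> a d i \<otimes>\<^bsub>G d\<^esub> z d (k i) \<in> P"
    using choice[OF choose] by blast
  define Gens where "Gens = {a d i \<otimes>\<^bsub>G d\<^esub> z d (k i) | i. i \<le> d - 2} \<union> {comm (G d) (a d 1) (a d (d - 1))}"
  define H where "H = generate (G d) Gens"
  have commP: "comm (G d) (a d 1) (a d (d - 1)) \<in> P"
  proof (cases "d = 2")
    case True
    then show ?thesis using comm1_2 subgroup.one_closed[OF S] by simp
  next
    case False
    then have d3: "d \<ge> 3" using d2 by simp
    have l: "length ?L = d - 1" "length ?M = d - 1" using d3 by auto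
    have "R d P ?M ?L" using R_sym[OF d1 l partA[OF S FP d3 assms(4)]] .
    then show ?thesis using comm1_3[OF d3] by (simp add: R_def)
  qed
  have GP: "Gens \<subseteq> P" using k commP by (auto simp: Gens_def)
  have GC: "Gens \<subseteq> carrier (G d)" using GP subgroup.subset[OF S] by blast
  have HP: "H \<subseteq> P" unfolding H_def using group.generate_subgroup_incl[OF group_G GP S] .
  have SH: "subgroup H (G d)" unfolding H_def using group.generate_is_subgroup[OF group_G GC] .
  have HC: "H \<subseteq> carrier (G d)" using subgroup.subset[OF SH] .
  define RR where "RR = {f. \<exists>h\<in>H. restr (d - 1) h = f}"
  have RRall: "is_aut (d - 1) \<sigma> \<Longrightarrow> \<sigma> \<in> RR" for \<sigma>
  proof (rule gen_all)
    show "id \<in> RR" unfolding RR_def using subgroup.one_closed[OF SH] restr_id by force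
    show "f \<circ> g \<in> RR" if fR: "f \<in> RR" and gR: "g \<in> RR" for f g
    proof -
      obtain h1 h2 where h: "h1 \<in> H" "h2 \<in> H" "restr (d - 1) h1 = f" "restr (d - 1) h2 = g"
        using fR gR unfolding RR_def by blast
      have "h1 \<circ> h2 \<in> H" using subgroup.m_closed[OF SH h(1,2)] by simp
      moreover have "restr (d - 1) (h1 \<circ> h2) = f \<circ> g" using restr_comp[of d h2] HC h by auto
      ultimately show ?thesis unfolding RR_def by blast
    qed
    show "a (d - 1) i \<in> RR" if "i < d - 1" for i
    proof -
      have ki: "k i < 4" "a d i \<otimes>\<^bsub>G d\<^esub> z d (k i) \<in> P" using k that by auto
      have "a d i \<otimes>\<^bsub>G d\<^esub> z d (k i) \<in> H" unfolding H_def Gens_def using that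
        by (intro generate.incl) auto
      moreover obtain \<alpha> \<beta> where zE: "z d (k i) = E d \<alpha> \<beta>" using z_cases[OF d2 ki(1)] by blast
      have zK: "z d (k i) \<in> K d" using zE E_K[OF d2] by simp
      have "restr (d - 1) (a d i \<circ> z d (k i)) = a (d - 1) i"
        using restr_comp[of d "z d (k i)" "d - 1" "a d i"] zK restr_K[OF zK] restr_a[of "d - 1" d i]
        by (simp add: K_def)
      ultimately show ?thesis unfolding RR_def by force
    qed
  qed
  have FH: "full d H" unfolding full_def
  proof (intro allI impI)
    fix \<tau> assume "is_aut d \<tau>"
    then have "restr (d - 1) \<tau> \<in> RR" using restr_aut[of d \<tau> "d - 1"] RRall by simp
    then show "\<exists>\<sigma>\<in>H. restr (d - 1) \<sigma> = restr (d - 1) \<tau>" unfolding RR_def by blast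
  qed
  have WH: "\<forall>x y. length x = d - 1 \<longrightarrow> length y = d - 1 \<longrightarrow> x ! 0 = y ! 0 \<longrightarrow> R d H x y"
  proof (cases "d = 2")
    case True then show ?thesis using same_half_2[of H] SH by simp
  next
    case False
    then have d3: "d \<ge> 3" using d2 by simp
    have l: "length ?L = d - 1" "length ?M = d - 1" using d3 by auto
    have "comm (G d) (a d 1) (a d (d - 1)) \<in> H" unfolding H_def Gens_def by (intro generate.incl) auto
    then have "R d H ?M ?L" using comm1_3[OF d3] by (simp add: R_def)
    then have "R d H ?L ?M" using R_sym[OF d1 l(2,1)] by blast
    then show ?thesis using half_lemma[OF SH FH d3] by blast
  qed
  have PH: "P \<subseteq> H"
  proof
    fix p assume pP: "p \<in> P"
    have pc: "p \<in> carrier (G d)" using subgroup.subset[OF S] pP by blast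
    obtain h where h: "h \<in> H" "restr (d - 1) h = restr (d - 1) p" using full_get[OF FH] pc by auto
    have hc: "h \<in> carrier (G d)" using HC h(1) by blast
    let ?k = "inv\<^bsub>G d\<^esub> h \<circ> p"
    have kK: "?k \<in> K d" using K_of_inv[OF hc pc h(2)] .
    have kc: "?k \<in> carrier (G d)" using K_carrier[OF kK] .
    obtain \<alpha> \<beta> where ab: "?k \<circ> E d \<alpha> \<beta> \<in> H" using K_decomp[OF SH d2 WH kK] by blast
    have ihP: "inv\<^bsub>G d\<^esub> h \<in> P" using HP subgroup.m_inv_closed[OF SH h(1)] by blast
    have kP: "?k \<in> P" using subgroup.m_closed[OF S ihP pP] by simp
    have "inv\<^bsub>G d\<^esub> ?k \<circ> (?k \<circ> E d \<alpha> \<beta>) \<in> P"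
      using subgroup.m_closed[OF S subgroup.m_inv_closed[OF S kP]] HP ab by auto
    moreover have "inv\<^bsub>G d\<^esub> ?k \<circ> (?k \<circ> E d \<alpha> \<beta>) = E d \<alpha> \<beta>"
      using inv_G_left[OF kc] by (simp add: comp_assoc[symmetric])
    ultimately have "E d \<alpha> \<beta> \<in> P" by simp
    then have "\<not> \<alpha> \<and> \<not> \<beta>" using coset_unique[OF S FP d2 WP assms(4)] by blast
    then have "?k \<in> H" using ab by (simp add: E_def)
    then have "h \<circ> ?k \<in> H" using subgroup.m_closed[OF SH h(1)] by simp
    moreover have "h \<circ> ?k = p" using inv_G_right[OF hc] by (simp add: comp_assoc[symmetric])
    ultimately show "p \<in> H" by simp
  qed
  have "P = H" using HP PH by blast
  then show ?thesis using k unfolding H_def Gens_def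
    by (intro exI[of _ k]) auto
qed


end
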